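(* Let $p$ be a prime, let $B$ be a nontrivial finite $p$-group and let $r\ge2$ be an integer. Then there are sequences $(G_n)$, $(H_n)$ of finite $p$-groups with $|G_n|\to\infty$, $|H_n|\to\infty$ and $a(G_n\wr H_n)\to p^r a(B)$.
   Context: For a finite group $G$, the average order is $a(G)=\frac{1}{|G|}\sum_{g\in G}\mathrm{order}(g)$. For groups $A,B$, let $K=\prod_{b\in B}A$, on which $B$ acts by $x\cdot(\alpha_b)_b=(\alpha_{x^{-1}b})_b$ for $x\in B$; the wreath product $A\wr B$ is the semidirect product $K\rtimes B$ for this action. *)

theory Defs
  imports Complex_Main "HOL-Algebra.Algebra"
begin

definition avg_order :: "('a, 'b) monoid_scheme \<Rightarrow> real" where
  "avg_order G = (\<Sum>g\<in>carrier G. real (group.ord G g)) / real (order G)"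

definition finite_p_group :: "nat \<Rightarrow> ('a, 'b) monoid_scheme \<Rightarrow> bool" where
  "finite_p_group p G \<longleftrightarrow> group G \<and> finite (carrier G) \<and> (\<exists>k. order G = p ^ k)"

text \<open>Wreath product A wr B = (prod over b in B of A) semidirect B, where x in B acts on
  K by (x . alpha)_b = alpha_(x^-1 b). Elements of K are extensional functions on carrier B.\<close>
definition wreath :: "('a, 'c) monoid_scheme \<Rightarrow> ('b, 'd) monoid_scheme \<Rightarrow> (('b \<Rightarrow> 'a) \<times> 'b) monoid" where
  "wreath A B = \<lparr> carrier = (carrier B \<rightarrow>\<^sub>E carrier A) \<times> carrier B,
     monoid.mult = (\<lambda>(f, x) (g, y). ((\<lambda>b\<in>carrier B. f b \<otimes>\<^bsub>A\<^esub> g (inv\<^bsub>B\<^esub> x \<otimes>\<^bsub>B\<^esub> b)), x \<otimes>\<^bsub>B\<^esub> y)),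
     monoid.one = ((\<lambda>b\<in>carrier B. \<one>\<^bsub>A\<^esub>), \<one>\<^bsub>B\<^esub>) \<rparr>"

end

theory Submission
  imports Defs
begin


primrec wcyc :: "('a,'c) monoid_scheme \<Rightarrow> ('b,'d) monoid_scheme \<Rightarrow> ('b \<Rightarrow> 'a) \<Rightarrow> 'b \<Rightarrow> nat \<Rightarrow> ('b \<Rightarrow> 'a)" where
  "wcyc A H f x 0 = (\<lambda>b\<in>carrier H. \<one>\<^bsub>A\<^esub>)"
| "wcyc A H f x (Suc k) = (\<lambda>b\<in>carrier H. wcyc A H f x k b \<otimes>\<^bsub>A\<^esub> f (inv\<^bsub>H\<^esub> (x [^]\<^bsub>H\<^esub> k) \<otimes>\<^bsub>H\<^esub> b))"

primrec wdd :: "('a,'c) monoid_scheme \<Rightarrow> ('b,'d) monoid_scheme \<Rightarrow> ('b \<Rightarrow> 'a) \<Rightarrow> 'b \<Rightarrow> nat \<Rightarrow> 'a" where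
  "wdd A H f x 0 = \<one>\<^bsub>A\<^esub>"
| "wdd A H f x (Suc k) = wdd A H f x k \<otimes>\<^bsub>A\<^esub> f (inv\<^bsub>H\<^esub> (x [^]\<^bsub>H\<^esub> (Suc k)))"

locale wr2 = A: group A + H: group H for A :: "('a,'c) monoid_scheme" and H :: "('b,'d) monoid_scheme"
begin

lemma W_carrier: "carrier (wreath A H) = (carrier H \<rightarrow>\<^sub>E carrier A) \<times> carrier H"
  by (simp add: wreath_def)
lemma W_mult: "(f,x) \<otimes>\<^bsub>wreath A H\<^esub> (g,y) =
   ((\<lambda>b\<in>carrier H. f b \<otimes>\<^bsub>A\<^esub> g (inv\<^bsub>H\<^esub> x \<otimes>\<^bsub>H\<^esub> b)), x \<otimes>\<^bsub>H\<^esub> y)"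
  by (simp add: wreath_def)
lemma W_one: "\<one>\<^bsub>wreath A H\<^esub> = ((\<lambda>b\<in>carrier H. \<one>\<^bsub>A\<^esub>), \<one>\<^bsub>H\<^esub>)"
  by (simp add: wreath_def)

lemma W_group: "group (wreath A H)"
proof (rule groupI)
  fix u v assume "u \<in> carrier (wreath A H)" "v \<in> carrier (wreath A H)"
  then show "u \<otimes>\<^bsub>wreath A H\<^esub> v \<in> carrier (wreath A H)"
    by (cases u, cases v) (auto simp: W_carrier W_mult PiE_iff)
next
  show "\<one>\<^bsub>wreath A H\<^esub> \<in> carrier (wreath A H)"
    by (auto simp: W_carrier W_one)
next
  fix u v w assume "u \<in> carrier (wreath A H)" "v \<in> carrier (wreath A H)" "w \<in> carrier (wreath A H)"
  then show "u \<otimes>\<^bsub>wreath A H\<^esub> v \<otimes>\<^bsub>wreath A H\<^esub> w = u \<otimes>\<^bsub>wreath A H\<^esub> (v \<otimes>\<^bsub>wreath A H\<^esub> w)"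
    by (cases u, cases v, cases w)
      (auto simp: W_carrier W_mult PiE_iff H.inv_mult_group A.m_assoc H.m_assoc intro!: restrict_ext)
next
  fix u assume "u \<in> carrier (wreath A H)"
  then show "\<one>\<^bsub>wreath A H\<^esub> \<otimes>\<^bsub>wreath A H\<^esub> u = u"
    by (cases u) (auto simp: W_carrier W_mult W_one PiE_iff intro!: extensionalityI[where A="carrier H"])
next
  fix u assume u: "u \<in> carrier (wreath A H)"
  obtain f x where fx: "u = (f, x)" by (cases u)
  have f: "f \<in> carrier H \<rightarrow>\<^sub>E carrier A" and x: "x \<in> carrier H" using u fx by (auto simp: W_carrier)
  let ?v = "((\<lambda>b\<in>carrier H. inv\<^bsub>A\<^esub> f (x \<otimes>\<^bsub>H\<^esub> b)), inv\<^bsub>H\<^esub> x)"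
  have "?v \<in> carrier (wreath A H)" using f x by (auto simp: W_carrier PiE_iff)
  moreover have "?v \<otimes>\<^bsub>wreath A H\<^esub> u = \<one>\<^bsub>wreath A H\<^esub>"
    using f x by (auto simp: fx W_mult W_one PiE_iff H.m_assoc[symmetric] intro!: restrict_ext)
  ultimately show "\<exists>v\<in>carrier (wreath A H). v \<otimes>\<^bsub>wreath A H\<^esub> u = \<one>\<^bsub>wreath A H\<^esub>" by blast
qed


lemma W_pow: assumes "f \<in> carrier H \<rightarrow>\<^sub>E carrier A" "x \<in> carrier H"
  shows "(f, x) [^]\<^bsub>wreath A H\<^esub> k = (wcyc A H f x k, x [^]\<^bsub>H\<^esub> k)"
proof (induction k)
  case 0
  then show ?case by (simp add: W_one) (simp only: restrict_def)
next
  case (Suc k)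
  then show ?case by (simp add: W_mult) (simp only: restrict_def)
qed

lemma wcyc_closed: assumes "f \<in> carrier H \<rightarrow>\<^sub>E carrier A" "x \<in> carrier H"
  shows "wcyc A H f x k \<in> carrier H \<rightarrow>\<^sub>E carrier A"
  using assms by (induction k) (auto simp: PiE_iff)

lemma W_pow_one: assumes "g \<in> carrier H \<rightarrow>\<^sub>E carrier A"
  shows "(g, \<one>\<^bsub>H\<^esub>) [^]\<^bsub>wreath A H\<^esub> (j::nat) = ((\<lambda>b\<in>carrier H. g b [^]\<^bsub>A\<^esub> j), \<one>\<^bsub>H\<^esub>)"
proof (induction j)
  case 0
  then show ?case by (simp add: W_one) (simp only: restrict_def)
next
  case (Suc j)
  then show ?case using assms by (auto simp: W_mult PiE_iff intro!: restrict_ext)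
qed

lemma wdd_closed: assumes "f \<in> carrier H \<rightarrow>\<^sub>E carrier A" "x \<in> carrier H"
  shows "wdd A H f x k \<in> carrier A"
  using assms by (induction k) (auto simp: PiE_iff)

lemma wcyc_one: assumes "f \<in> carrier H \<rightarrow>\<^sub>E carrier A" "x \<in> carrier H"
  shows "wcyc A H f x (Suc k) \<one>\<^bsub>H\<^esub> = f \<one>\<^bsub>H\<^esub> \<otimes>\<^bsub>A\<^esub> wdd A H f x k"
proof (induction k)
  case 0
  then show ?case using assms by (auto simp: PiE_iff)
next
  case (Suc k)
  have "wcyc A H f x (Suc (Suc k)) \<one>\<^bsub>H\<^esub> = wcyc A H f x (Suc k) \<one>\<^bsub>H\<^esub> \<otimes>\<^bsub>A\<^esub> f (inv\<^bsub>H\<^esub> (x [^]\<^bsub>H\<^esub> Suc k))"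
    using assms by (simp del: wcyc.simps(2) add: wcyc.simps(2)[of _ _ _ _ "Suc k"] del: H.nat_pow_Suc)
  also have "\<dots> = f \<one>\<^bsub>H\<^esub> \<otimes>\<^bsub>A\<^esub> wdd A H f x (Suc k)"
    using Suc assms wdd_closed[OF assms] by (simp add: A.m_assoc PiE_iff del: H.nat_pow_Suc)
  finally show ?case .
qed

lemma wdd_cong: assumes "\<And>i. 1 \<le> i \<Longrightarrow> i \<le> k \<Longrightarrow> f (inv\<^bsub>H\<^esub> (x [^]\<^bsub>H\<^esub> i)) = g (inv\<^bsub>H\<^esub> (x [^]\<^bsub>H\<^esub> i))"
  shows "wdd A H f x k = wdd A H g x k"
  using assms
proof (induction k)
  case 0
  show ?case by (simp only: wdd.simps)
next
  case (Suc k)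
  have "f (inv\<^bsub>H\<^esub> (x [^]\<^bsub>H\<^esub> Suc k)) = g (inv\<^bsub>H\<^esub> (x [^]\<^bsub>H\<^esub> Suc k))"
    by (rule Suc.prems) simp_all
  moreover have "wdd A H f x k = wdd A H g x k" 
    by (rule Suc.IH, rule Suc.prems) simp_all
  ultimately show ?case by (simp only: wdd.simps)
qed


lemma W_ord_dvd:
  assumes f: "f \<in> carrier H \<rightarrow>\<^sub>E carrier A" and x: "x \<in> carrier H"
    and e: "\<forall>a\<in>carrier A. A.ord a dvd e"
  shows "group.ord (wreath A H) (f, x) dvd H.ord x * e"
proof -
  interpret W: group "wreath A H" by (rule W_group)
  have fx: "(f, x) \<in> carrier (wreath A H)" using f x by (simp add: W_carrier)
  have c: "wcyc A H f x (H.ord x) \<in> carrier H \<rightarrow>\<^sub>E carrier A" by (rule wcyc_closed[OF f x])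
  have "(f, x) [^]\<^bsub>wreath A H\<^esub> (H.ord x * e) = ((f, x) [^]\<^bsub>wreath A H\<^esub> H.ord x) [^]\<^bsub>wreath A H\<^esub> e"
    using fx by (simp add: W.nat_pow_pow)
  also have "\<dots> = (wcyc A H f x (H.ord x), \<one>\<^bsub>H\<^esub>) [^]\<^bsub>wreath A H\<^esub> e"
    using W_pow[OF f x] x by simp
  also have "\<dots> = ((\<lambda>b\<in>carrier H. wcyc A H f x (H.ord x) b [^]\<^bsub>A\<^esub> e), \<one>\<^bsub>H\<^esub>)"
    by (rule W_pow_one[OF c])
  also have "\<dots> = \<one>\<^bsub>wreath A H\<^esub>"
    using c e by (auto simp: W_one PiE_iff A.pow_eq_id intro!: restrict_ext)
  finally show ?thesis using fx W.pow_eq_id by blast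
qed

lemma W_ord_ge:
  assumes f: "f \<in> carrier H \<rightarrow>\<^sub>E carrier A" and x: "x \<in> carrier H"
    and e: "A.ord (wcyc A H f x (H.ord x) \<one>\<^bsub>H\<^esub>) = e"
  shows "H.ord x * e dvd group.ord (wreath A H) (f, x)"
proof -
  interpret W: group "wreath A H" by (rule W_group)
  have fx: "(f, x) \<in> carrier (wreath A H)" using f x by (simp add: W_carrier)
  have c: "wcyc A H f x (H.ord x) \<in> carrier H \<rightarrow>\<^sub>E carrier A" by (rule wcyc_closed[OF f x])
  define k where "k = W.ord (f, x)"
  have k1: "(f, x) [^]\<^bsub>wreath A H\<^esub> k = \<one>\<^bsub>wreath A H\<^esub>" using fx by (simp add: k_def)
  then have "x [^]\<^bsub>H\<^esub> k = \<one>\<^bsub>H\<^esub>" by (simp add: W_pow[OF f x] W_one)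
  then have "H.ord x dvd k" using x H.pow_eq_id by blast
  then obtain j where kj: "k = H.ord x * j" by blast
  have "\<one>\<^bsub>wreath A H\<^esub> = ((f, x) [^]\<^bsub>wreath A H\<^esub> H.ord x) [^]\<^bsub>wreath A H\<^esub> j"
    using k1 fx by (simp add: W.nat_pow_pow kj)
  also have "\<dots> = (wcyc A H f x (H.ord x), \<one>\<^bsub>H\<^esub>) [^]\<^bsub>wreath A H\<^esub> j"
    using W_pow[OF f x] x by simp
  also have "\<dots> = ((\<lambda>b\<in>carrier H. wcyc A H f x (H.ord x) b [^]\<^bsub>A\<^esub> j), \<one>\<^bsub>H\<^esub>)"
    by (rule W_pow_one[OF c])
  finally have eq: "(\<lambda>b\<in>carrier H. \<one>\<^bsub>A\<^esub>) = (\<lambda>b\<in>carrier H. wcyc A H f x (H.ord x) b [^]\<^bsub>A\<^esub> j)"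
    by (simp add: W_one)
  have "wcyc A H f x (H.ord x) \<one>\<^bsub>H\<^esub> [^]\<^bsub>A\<^esub> j = \<one>\<^bsub>A\<^esub>"
    using fun_cong[OF eq, of "\<one>\<^bsub>H\<^esub>"] by simp
  then have "e dvd j" using c e A.pow_eq_id by (auto simp: PiE_iff)
  then show ?thesis unfolding k_def[symmetric] kj by simp
qed


lemma W_count:
  assumes fA: "finite (carrier A)" and fH: "finite (carrier H)" and x: "x \<in> carrier H"
    and S: "S \<subseteq> carrier A"
  shows "card {f \<in> carrier H \<rightarrow>\<^sub>E carrier A. wcyc A H f x (H.ord x) \<one>\<^bsub>H\<^esub> \<in> S}
         = card S * card (carrier A) ^ (card (carrier H) - 1)"
proof -
  let ?K = "carrier H \<rightarrow>\<^sub>E carrier A"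
  define m where "m = H.ord x"
  have m1: "m \<ge> 1" using H.ord_ge_1[OF fH x] by (simp add: m_def)
  define \<Phi> where "\<Phi> f = f(\<one>\<^bsub>H\<^esub> := f \<one>\<^bsub>H\<^esub> \<otimes>\<^bsub>A\<^esub> wdd A H f x (m - 1))" for f
  have ne: "inv\<^bsub>H\<^esub> (x [^]\<^bsub>H\<^esub> i) \<noteq> \<one>\<^bsub>H\<^esub>" if "1 \<le> i" "i \<le> m - 1" for i
  proof
    assume "inv\<^bsub>H\<^esub> (x [^]\<^bsub>H\<^esub> i) = \<one>\<^bsub>H\<^esub>"
    then have "x [^]\<^bsub>H\<^esub> i = \<one>\<^bsub>H\<^esub>" using x by simp
    then have "m dvd i" using x H.pow_eq_id by (simp add: m_def)
    then show False using that by (auto dest: dvd_imp_le)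
  qed
  have wddP: "wdd A H (\<Phi> f) x (m - 1) = wdd A H f x (m - 1)" for f
    by (rule wdd_cong) (use ne in \<open>auto simp: \<Phi>_def\<close>)
  have wc: "wcyc A H f x m \<one>\<^bsub>H\<^esub> = \<Phi> f \<one>\<^bsub>H\<^esub>" if "f \<in> ?K" for f
    using wcyc_one[OF that x, of "m - 1"] m1 by (simp add: \<Phi>_def)
  have PK: "\<Phi> f \<in> ?K" if "f \<in> ?K" for f
    using that wdd_closed[OF that x] by (auto simp: \<Phi>_def PiE_iff extensional_def)
  have inj: "inj_on \<Phi> ?K"
  proof (rule inj_onI)
    fix f g assume f: "f \<in> ?K" and g: "g \<in> ?K" and eq: "\<Phi> f = \<Phi> g"
    have d: "wdd A H f x (m - 1) = wdd A H g x (m - 1)" using wddP[of f] wddP[of g] eq by simp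
    have "f \<one>\<^bsub>H\<^esub> \<otimes>\<^bsub>A\<^esub> wdd A H f x (m - 1) = g \<one>\<^bsub>H\<^esub> \<otimes>\<^bsub>A\<^esub> wdd A H f x (m - 1)"
      using fun_cong[OF eq, of "\<one>\<^bsub>H\<^esub>"] d by (simp add: \<Phi>_def)
    then have "f \<one>\<^bsub>H\<^esub> = g \<one>\<^bsub>H\<^esub>" using f g wdd_closed[OF f x] by (auto simp: PiE_iff)
    moreover have "f b = g b" if "b \<noteq> \<one>\<^bsub>H\<^esub>" for b
      using fun_cong[OF eq, of b] that by (simp add: \<Phi>_def)
    ultimately show "f = g" by (intro ext) metis
  qed
  have img: "\<Phi> ` ?K = ?K"
    by (rule endo_inj_surj) (use fA fH PK inj in \<open>auto intro: finite_PiE\<close>)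
  have e1: "{f \<in> ?K. wcyc A H f x (H.ord x) \<one>\<^bsub>H\<^esub> \<in> S} = {f \<in> ?K. \<Phi> f \<one>\<^bsub>H\<^esub> \<in> S}"
    using wc by (auto simp: m_def)
  have e2: "\<Phi> ` {f \<in> ?K. \<Phi> f \<one>\<^bsub>H\<^esub> \<in> S} = {g \<in> ?K. g \<one>\<^bsub>H\<^esub> \<in> S}"
  proof (intro equalityI subsetI)
    fix g assume "g \<in> \<Phi> ` {f \<in> ?K. \<Phi> f \<one>\<^bsub>H\<^esub> \<in> S}"
    then show "g \<in> {g \<in> ?K. g \<one>\<^bsub>H\<^esub> \<in> S}" using PK by auto
  next
    fix g assume g: "g \<in> {g \<in> ?K. g \<one>\<^bsub>H\<^esub> \<in> S}"
    then have "g \<in> \<Phi> ` ?K" using img by simp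
    then obtain f where "f \<in> ?K" "g = \<Phi> f" by blast
    then show "g \<in> \<Phi> ` {f \<in> ?K. \<Phi> f \<one>\<^bsub>H\<^esub> \<in> S}" using g by blast
  qed
  have e3: "inj_on \<Phi> {f \<in> ?K. \<Phi> f \<one>\<^bsub>H\<^esub> \<in> S}" using inj by (rule inj_on_subset) blast
  have "card {f \<in> ?K. wcyc A H f x (H.ord x) \<one>\<^bsub>H\<^esub> \<in> S} = card {g \<in> ?K. g \<one>\<^bsub>H\<^esub> \<in> S}"
    unfolding e1 e2[symmetric] by (rule card_image[OF e3, symmetric])
  also have "{g \<in> ?K. g \<one>\<^bsub>H\<^esub> \<in> S} = (\<Pi>\<^sub>E b\<in>carrier H. if b = \<one>\<^bsub>H\<^esub> then S else carrier A)"
  proof (intro equalityI subsetI)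
    fix g assume "g \<in> {g \<in> ?K. g \<one>\<^bsub>H\<^esub> \<in> S}"
    then show "g \<in> (\<Pi>\<^sub>E b\<in>carrier H. if b = \<one>\<^bsub>H\<^esub> then S else carrier A)"
      by (auto simp: PiE_iff)
  next
    fix g assume g: "g \<in> (\<Pi>\<^sub>E b\<in>carrier H. if b = \<one>\<^bsub>H\<^esub> then S else carrier A)"
    have "g \<one>\<^bsub>H\<^esub> \<in> (if \<one>\<^bsub>H\<^esub> = \<one>\<^bsub>H\<^esub> then S else carrier A)"
      using g H.one_closed by (rule PiE_mem)
    then have g1: "g \<one>\<^bsub>H\<^esub> \<in> S" by simp
    moreover have "g b \<in> carrier A" if "b \<in> carrier H" for b
      using g that S g1 by (cases "b = \<one>\<^bsub>H\<^esub>") (auto simp: PiE_iff)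
    ultimately show "g \<in> {g \<in> ?K. g \<one>\<^bsub>H\<^esub> \<in> S}" using g by (auto simp: PiE_iff)
  qed
  also have "card \<dots> = (\<Prod>b\<in>carrier H. card (if b = \<one>\<^bsub>H\<^esub> then S else carrier A))"
    by (rule card_PiE[OF fH])
  also have "\<dots> = card S * (\<Prod>b\<in>carrier H - {\<one>\<^bsub>H\<^esub>}. card (carrier A))"
    using fH by (simp add: prod.remove[OF fH H.one_closed])
  also have "\<dots> = card S * card (carrier A) ^ (card (carrier H) - 1)"
    using fH by simp
  finally show ?thesis .
qed


lemma W_avg_bounds:
  assumes fA: "finite (carrier A)" and fH: "finite (carrier H)" and e: "e > 0"
    and ediv: "\<forall>a\<in>carrier A. A.ord a dvd e" and S: "S \<subseteq> carrier A"
    and Se: "\<forall>a\<in>S. A.ord a = e" and c: "c * real (card (carrier A)) \<le> real (card S)"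
  shows "c * real e * avg_order H \<le> avg_order (wreath A H)"
    and "avg_order (wreath A H) \<le> real e * avg_order H"
proof -
  interpret W: group "wreath A H" by (rule W_group)
  let ?K = "carrier H \<rightarrow>\<^sub>E carrier A"
  define N where "N = card (carrier H)"
  define \<alpha> where "\<alpha> = card (carrier A)"
  have N1: "N \<ge> 1" using fH H.one_closed by (auto simp: N_def Suc_le_eq card_gt_0_iff)
  have fK: "finite ?K" using fA fH by (auto intro: finite_PiE)
  have cardK: "card ?K = \<alpha> ^ N" using card_PiE[OF fH, of "\<lambda>_. carrier A"] by (simp add: \<alpha>_def N_def)
  have ordW: "order (wreath A H) = \<alpha> ^ N * N"
    by (simp add: order_def W_carrier card_cartesian_product cardK N_def)
  define T where "T x = (\<Sum>f\<in>?K. real (W.ord (f, x)))" for x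
  have sumW: "(\<Sum>g\<in>carrier (wreath A H). real (W.ord g)) = (\<Sum>x\<in>carrier H. T x)"
  proof -
    have "(\<Sum>g\<in>?K \<times> carrier H. real (W.ord g)) = (\<Sum>f\<in>?K. \<Sum>x\<in>carrier H. real (W.ord (f, x)))"
      using sum.cartesian_product[of "\<lambda>f x. real (W.ord (f, x))" "carrier H" ?K] by (simp add: split_def)
    also have "\<dots> = (\<Sum>x\<in>carrier H. T x)" unfolding T_def by (rule sum.swap)
    finally show ?thesis by (simp add: W_carrier)
  qed
  have avgW: "avg_order (wreath A H) = (\<Sum>x\<in>carrier H. T x) / (real \<alpha> ^ N * real N)"
    by (simp add: avg_order_def sumW ordW)
  have avgH: "avg_order H = (\<Sum>x\<in>carrier H. real (H.ord x)) / real N"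
    by (simp add: avg_order_def order_def N_def)
  have up: "T x \<le> real \<alpha> ^ N * (real e * real (H.ord x))" if x: "x \<in> carrier H" for x
  proof -
    have "T x \<le> (\<Sum>f\<in>?K. real e * real (H.ord x))"
      unfolding T_def
    proof (rule sum_mono)
      fix f assume f: "f \<in> ?K"
      have "W.ord (f, x) dvd H.ord x * e" by (rule W_ord_dvd[OF f x ediv])
      moreover have "H.ord x * e > 0" using H.ord_ge_1[OF fH x] e by simp
      ultimately have "W.ord (f, x) \<le> H.ord x * e" by (rule dvd_imp_le)
      then show "real (W.ord (f, x)) \<le> real e * real (H.ord x)"
        by (metis of_nat_le_iff of_nat_mult mult.commute)
    qed
    also have "\<dots> = real \<alpha> ^ N * (real e * real (H.ord x))" by (simp add: cardK)
    finally show ?thesis .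
  qed
  have low: "c * real \<alpha> ^ N * (real e * real (H.ord x)) \<le> T x" if x: "x \<in> carrier H" for x
  proof -
    define good where "good = {f \<in> ?K. wcyc A H f x (H.ord x) \<one>\<^bsub>H\<^esub> \<in> S}"
    have cg: "card good = card S * \<alpha> ^ (N - 1)"
      unfolding good_def \<alpha>_def N_def by (rule W_count[OF fA fH x S])
    have "c * real \<alpha> ^ N = c * real \<alpha> * real \<alpha> ^ (N - 1)"
      using N1 by (metis (no_types) mult.assoc power_eq_if not_one_le_zero power_Suc Suc_diff_1 neq0_conv less_le_trans zero_less_one)
    also have "\<dots> \<le> real (card S) * real \<alpha> ^ (N - 1)"
      using c by (intro mult_right_mono) (auto simp: \<alpha>_def)
    also have "\<dots> = real (card good)" by (simp add: cg)
    finally have cgood: "c * real \<alpha> ^ N \<le> real (card good)" .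
    have "c * real \<alpha> ^ N * (real e * real (H.ord x)) \<le> real (card good) * (real e * real (H.ord x))"
      using cgood by (intro mult_right_mono) auto
    also have "\<dots> = (\<Sum>f\<in>good. real (W.ord (f, x)))"
    proof -
      have "W.ord (f, x) = H.ord x * e" if f: "f \<in> good" for f
      proof -
        have fK': "f \<in> ?K" using f by (simp add: good_def)
        have "A.ord (wcyc A H f x (H.ord x) \<one>\<^bsub>H\<^esub>) = e" using f Se by (auto simp: good_def)
        then have "H.ord x * e dvd W.ord (f, x)" by (rule W_ord_ge[OF fK' x])
        moreover have "W.ord (f, x) dvd H.ord x * e" by (rule W_ord_dvd[OF fK' x ediv])
        ultimately show ?thesis by (rule dvd_antisym[symmetric])
      qed
      then show ?thesis by (simp add: mult.commute)
    qed
    also have "\<dots> \<le> T x"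
      unfolding T_def by (rule sum_mono2[OF fK]) (auto simp: good_def)
    finally show ?thesis .
  qed
  have Npos: "real N > 0" using N1 by simp
  have apos: "real \<alpha> ^ N > 0" using fA A.one_closed by (auto simp: \<alpha>_def card_gt_0_iff)
  have "(\<Sum>x\<in>carrier H. T x) \<le> (\<Sum>x\<in>carrier H. real \<alpha> ^ N * (real e * real (H.ord x)))"
    by (rule sum_mono) (rule up)
  also have "\<dots> = real \<alpha> ^ N * real e * (\<Sum>x\<in>carrier H. real (H.ord x))"
    by (simp add: sum_distrib_left mult.assoc)
  finally have U: "(\<Sum>x\<in>carrier H. T x) \<le> real \<alpha> ^ N * real e * (\<Sum>x\<in>carrier H. real (H.ord x))" .
  have "c * real \<alpha> ^ N * real e * (\<Sum>x\<in>carrier H. real (H.ord x)) = (\<Sum>x\<in>carrier H. c * real \<alpha> ^ N * (real e * real (H.ord x)))"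
    by (simp add: sum_distrib_left mult.assoc)
  also have "\<dots> \<le> (\<Sum>x\<in>carrier H. T x)"
    by (rule sum_mono) (rule low)
  finally have L: "c * real \<alpha> ^ N * real e * (\<Sum>x\<in>carrier H. real (H.ord x)) \<le> (\<Sum>x\<in>carrier H. T x)" .
  show "avg_order (wreath A H) \<le> real e * avg_order H"
    unfolding avgW avgH using U Npos apos
    by (simp add: field_simps mult.commute mult.left_commute)
  show "c * real e * avg_order H \<le> avg_order (wreath A H)"
    unfolding avgW avgH using L Npos apos
    by (simp add: field_simps mult.commute mult.left_commute)
qed

end


definition zqn :: "nat \<Rightarrow> nat \<Rightarrow> (nat \<Rightarrow> nat) monoid" where
  "zqn q n = \<lparr> carrier = {..<n} \<rightarrow>\<^sub>E {..<q},
     monoid.mult = (\<lambda>f g. \<lambda>i\<in>{..<n}. (f i + g i) mod q),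
     monoid.one = (\<lambda>i\<in>{..<n}. 0) \<rparr>"

lemma zqn_group: assumes q: "q > 0" shows "group (zqn q n)"
proof (rule groupI)
  fix x y assume "x \<in> carrier (zqn q n)" "y \<in> carrier (zqn q n)"
  then show "x \<otimes>\<^bsub>zqn q n\<^esub> y \<in> carrier (zqn q n)" using q by (auto simp: zqn_def PiE_iff)
next
  show "\<one>\<^bsub>zqn q n\<^esub> \<in> carrier (zqn q n)" using q by (auto simp: zqn_def)
next
  fix x y z assume "x \<in> carrier (zqn q n)" "y \<in> carrier (zqn q n)" "z \<in> carrier (zqn q n)"
  then show "x \<otimes>\<^bsub>zqn q n\<^esub> y \<otimes>\<^bsub>zqn q n\<^esub> z = x \<otimes>\<^bsub>zqn q n\<^esub> (y \<otimes>\<^bsub>zqn q n\<^esub> z)"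
    by (auto simp: zqn_def PiE_iff mod_add_left_eq mod_add_right_eq add.assoc intro!: restrict_ext)
next
  fix x assume "x \<in> carrier (zqn q n)"
  then show "\<one>\<^bsub>zqn q n\<^esub> \<otimes>\<^bsub>zqn q n\<^esub> x = x"
    by (auto simp: zqn_def PiE_iff intro!: extensionalityI[where A="{..<n}"])
next
  fix x assume x: "x \<in> carrier (zqn q n)"
  let ?y = "\<lambda>i\<in>{..<n}. (q - x i) mod q"
  have "?y \<in> carrier (zqn q n)" using q by (auto simp: zqn_def)
  moreover have "?y \<otimes>\<^bsub>zqn q n\<^esub> x = \<one>\<^bsub>zqn q n\<^esub>"
  proof -
    have "((q - x i) mod q + x i) mod q = 0" if "i < n" for i
    proof -
      have "x i < q" using x that by (auto simp: zqn_def PiE_iff)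
      then have "q - x i + x i = q" by simp
      then show ?thesis by (simp add: mod_add_left_eq)
    qed
    then show ?thesis using x by (auto simp: zqn_def intro!: restrict_ext)
  qed
  ultimately show "\<exists>y\<in>carrier (zqn q n). y \<otimes>\<^bsub>zqn q n\<^esub> x = \<one>\<^bsub>zqn q n\<^esub>" by blast
qed

lemma zqn_pow: assumes "f \<in> carrier (zqn q n)"
  shows "f [^]\<^bsub>zqn q n\<^esub> k = (\<lambda>i\<in>{..<n}. (k * f i) mod q)"
proof (induction k)
  case 0
  then show ?case by (simp add: zqn_def)
next
  case (Suc k)
  have "f [^]\<^bsub>zqn q n\<^esub> Suc k = f [^]\<^bsub>zqn q n\<^esub> k \<otimes>\<^bsub>zqn q n\<^esub> f" by (rule nat_pow_Suc)
  also have "\<dots> = (\<lambda>i\<in>{..<n}. ((\<lambda>i\<in>{..<n}. (k * f i) mod q) i + f i) mod q)"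
    unfolding Suc.IH by (simp add: zqn_def)
  also have "\<dots> = (\<lambda>i\<in>{..<n}. (Suc k * f i) mod q)"
  proof (rule restrict_ext)
    fix i assume "i \<in> {..<n}"
    then have "((\<lambda>i\<in>{..<n}. (k * f i) mod q) i + f i) mod q = ((k * f i) mod q + f i) mod q" by simp
    also have "\<dots> = (k * f i + f i) mod q" by (rule mod_add_left_eq)
    also have "\<dots> = (Suc k * f i) mod q" by (simp add: add.commute)
    finally show "((\<lambda>i\<in>{..<n}. (k * f i) mod q) i + f i) mod q = (Suc k * f i) mod q" .
  qed
  finally show ?case .
qed

lemma zqn_props:
  assumes q: "q \<ge> 2"
  shows "group (zqn q n) \<and> finite (carrier (zqn q n)) \<and> order (zqn q n) = q ^ n
    \<and> (\<forall>a\<in>carrier (zqn q n). group.ord (zqn q n) a dvd q)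
    \<and> (\<exists>S \<subseteq> carrier (zqn q n). (\<forall>a\<in>S. group.ord (zqn q n) a = q) \<and>
         (1 - ((real q - 1) / real q) ^ n) * real (card (carrier (zqn q n))) \<le> real (card S))"
proof -
  interpret Z: group "zqn q n" by (rule zqn_group) (use q in simp)
  have car: "carrier (zqn q n) = {..<n} \<rightarrow>\<^sub>E {..<q}" by (simp add: zqn_def)
  have fin: "finite (carrier (zqn q n))" by (simp add: car finite_PiE)
  have cc: "card (carrier (zqn q n)) = q ^ n" by (simp add: car card_PiE)
  have one: "\<one>\<^bsub>zqn q n\<^esub> = (\<lambda>i\<in>{..<n}. 0)" by (simp add: zqn_def)
  have dv: "Z.ord a dvd q" if a: "a \<in> carrier (zqn q n)" for a
  proof -
    have "a [^]\<^bsub>zqn q n\<^esub> q = \<one>\<^bsub>zqn q n\<^esub>" using a by (simp add: zqn_pow one)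
    then show ?thesis using a Z.pow_eq_id by blast
  qed
  define S where "S = {f \<in> carrier (zqn q n). \<exists>i<n. f i = 1}"
  have Sq: "Z.ord a = q" if a: "a \<in> S" for a
  proof -
    have ac: "a \<in> carrier (zqn q n)" using a by (simp add: S_def)
    obtain i where i: "i < n" "a i = 1" using a by (auto simp: S_def)
    have "a [^]\<^bsub>zqn q n\<^esub> Z.ord a = \<one>\<^bsub>zqn q n\<^esub>" using ac by simp
    then have "(\<lambda>i\<in>{..<n}. (Z.ord a * a i) mod q) i = (\<lambda>i\<in>{..<n}. 0::nat) i"
      by (simp add: zqn_pow[OF ac] one)
    then have "q dvd Z.ord a" using i by (simp add: mod_eq_0_iff_dvd)
    then show ?thesis using dv[OF ac] by (simp add: dvd_antisym)
  qed
  have comp: "carrier (zqn q n) - S = {..<n} \<rightarrow>\<^sub>E ({..<q} - {1})"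
  proof (intro equalityI subsetI)
    fix f assume f: "f \<in> carrier (zqn q n) - S"
    then have "f \<in> {..<n} \<rightarrow>\<^sub>E {..<q}" "\<forall>i<n. f i \<noteq> 1" by (auto simp: S_def car)
    then show "f \<in> {..<n} \<rightarrow>\<^sub>E ({..<q} - {1})" by (simp add: PiE_iff)
  next
    fix f assume f: "f \<in> {..<n} \<rightarrow>\<^sub>E ({..<q} - {1})"
    then have "f \<in> {..<n} \<rightarrow>\<^sub>E {..<q}" "\<forall>i<n. f i \<noteq> 1" by (auto simp: PiE_iff)
    then show "f \<in> carrier (zqn q n) - S" by (auto simp: S_def car)
  qed
  have cS: "card S = q ^ n - (q - 1) ^ n"
  proof -
    have "card (carrier (zqn q n) - S) = (q - 1) ^ n" using q by (simp add: comp card_PiE)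
    moreover have sub: "S \<subseteq> carrier (zqn q n)" by (auto simp: S_def)
    moreover have "card (carrier (zqn q n) - S) = card (carrier (zqn q n)) - card S"
      using sub fin by (intro card_Diff_subset) (auto intro: finite_subset)
    moreover have "card S \<le> card (carrier (zqn q n))" using sub fin by (rule card_mono[rotated])
    ultimately show ?thesis by (simp add: cc)
  qed
  have le: "(q - 1) ^ n \<le> q ^ n" by (rule power_mono) auto
  have "(1 - ((real q - 1) / real q) ^ n) * real (q ^ n) = real q ^ n - (real q - 1) ^ n"
    using q by (simp add: field_simps power_divide)
  also have "\<dots> = real (card S)" using le q by (simp add: cS of_nat_diff)
  finally have cle: "(1 - ((real q - 1) / real q) ^ n) * real (card (carrier (zqn q n))) \<le> real (card S)"
    by (simp add: cc)
  have sub: "S \<subseteq> carrier (zqn q n)" by (auto simp: S_def)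
  have g1: "group (zqn q n)" by (rule Z.is_group)
  have g2: "order (zqn q n) = q ^ n" using cc by (simp add: order_def)
  have g3: "\<forall>a\<in>carrier (zqn q n). group.ord (zqn q n) a dvd q" using dv by blast
  have g4: "\<exists>S \<subseteq> carrier (zqn q n). (\<forall>a\<in>S. group.ord (zqn q n) a = q) \<and>
         (1 - ((real q - 1) / real q) ^ n) * real (card (carrier (zqn q n))) \<le> real (card S)"
    using sub Sq cle by blast
  show ?thesis by (intro conjI g1 fin g2 g3 g4)
qed



lemma W_order: assumes "finite (carrier A)" "finite (carrier H)"
  shows "order (wreath A H) = card (carrier A) ^ card (carrier H) * card (carrier H)"
    and "finite (carrier (wreath A H))"
  using assms by (simp_all add: order_def wreath_def card_cartesian_product card_PiE finite_PiE)

lemma transport_nat: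
  assumes G: "group G" and fG: "finite (carrier G)"
  shows "\<exists>G' :: nat monoid. group G' \<and> finite (carrier G') \<and> order G' = order G \<and>
     avg_order G' = avg_order G \<and>
     (\<exists>\<phi>. bij_betw \<phi> (carrier G) (carrier G') \<and> (\<forall>g\<in>carrier G. group.ord G' (\<phi> g) = group.ord G g))"
proof -
  interpret G: group G by (rule G)
  obtain \<phi> :: "'a \<Rightarrow> nat" and m where im: "\<phi> ` carrier G = {i. i < m}" and inj: "inj_on \<phi> (carrier G)"
    using finite_imp_inj_to_nat_seg[OF fG] by blast
  define G' where "G' = image_group \<phi> G"
  have G'g: "group G'" unfolding G'_def by (rule G.inj_imp_image_group_is_group[OF inj])
  interpret G': group G' by (rule G'g)
  have iso: "\<phi> \<in> iso G G'" unfolding G'_def by (rule inj_imp_image_group_iso[OF inj])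
  have hom: "\<phi> \<in> hom G G'" using iso by (simp add: iso_def)
  have car: "carrier G' = \<phi> ` carrier G" by (simp add: G'_def image_group_carrier)
  have one: "\<one>\<^bsub>G'\<^esub> = \<phi> \<one>\<^bsub>G\<^esub>" by (simp add: G'_def image_group_one)
  have ordp: "G'.ord (\<phi> g) = G.ord g" if g: "g \<in> carrier G" for g
  proof -
    have "\<phi> g \<in> carrier G'" using g car by simp
    moreover have "(\<phi> g [^]\<^bsub>G'\<^esub> k = \<one>\<^bsub>G'\<^esub>) \<longleftrightarrow> G.ord g dvd k" for k
    proof -
      have "\<phi> g [^]\<^bsub>G'\<^esub> k = \<phi> (g [^]\<^bsub>G\<^esub> k)" using hom_nat_pow[OF hom g G G'g] by simp
      moreover have "\<phi> (g [^]\<^bsub>G\<^esub> k) = \<phi> \<one>\<^bsub>G\<^esub> \<longleftrightarrow> g [^]\<^bsub>G\<^esub> k = \<one>\<^bsub>G\<^esub>"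
        using inj g by (auto dest: inj_onD)
      ultimately show ?thesis using one G.pow_eq_id[OF g] by simp
    qed
    ultimately show ?thesis using G'.ord_unique by blast
  qed
  have bij: "bij_betw \<phi> (carrier G) (carrier G')" using inj car by (simp add: bij_betw_def)
  have ord_eq: "order G' = order G" using bij by (simp add: order_def bij_betw_same_card[symmetric])
  have "(\<Sum>y\<in>carrier G'. real (G'.ord y)) = (\<Sum>g\<in>carrier G. real (G'.ord (\<phi> g)))"
    unfolding car by (rule sum.reindex[OF inj, unfolded comp_def])
  also have "\<dots> = (\<Sum>g\<in>carrier G. real (G.ord g))" by (rule sum.cong) (simp_all add: ordp)
  finally have "avg_order G' = avg_order G" by (simp add: avg_order_def ord_eq)
  moreover have "finite (carrier G')" using car fG by simp
  ultimately show ?thesis using G'g ord_eq bij ordp by blast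
qed



lemma avg_nonneg: "avg_order G \<ge> 0"
  by (simp add: avg_order_def sum_nonneg divide_nonneg_nonneg)

lemma cfac: assumes "q \<ge> (2::nat)"
  shows "0 \<le> 1 - ((real q - 1) / real q) ^ n" and "(\<lambda>n. 1 - ((real q - 1) / real q) ^ n) \<longlonglongrightarrow> 1"
proof -
  have a: "0 \<le> (real q - 1) / real q" "(real q - 1) / real q < 1" using assms by auto
  show "0 \<le> 1 - ((real q - 1) / real q) ^ n" using a by (simp add: power_le_one)
  have "(\<lambda>n. ((real q - 1) / real q) ^ n) \<longlonglongrightarrow> 0" using a by (intro LIMSEQ_power_zero) simp
  then show "(\<lambda>n. 1 - ((real q - 1) / real q) ^ n) \<longlonglongrightarrow> 1"
    using tendsto_diff[OF tendsto_const[of 1]] by fastforce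
qed

lemma n_le_pow: "(q::nat) \<ge> 2 \<Longrightarrow> n \<le> q ^ n"
proof -
  assume "q \<ge> 2"
  then have a: "2 ^ n \<le> q ^ n" by (rule power_mono) simp
  have b: "n < 2 ^ n" by (rule less_exp)
  from a b show ?thesis by linarith
qed

theorem corollary7p1:
  fixes p r :: nat and B :: "('b, 'c) monoid_scheme"
  assumes "Factorial_Ring.prime p" and "finite_p_group p B" and "order B > 1" and "r \<ge> 2"
  shows "\<exists>(G :: nat \<Rightarrow> nat monoid) (H :: nat \<Rightarrow> nat monoid).
           (\<forall>n. finite_p_group p (G n) \<and> finite_p_group p (H n)) \<and>
           filterlim (\<lambda>n. order (G n)) at_top sequentially \<and>
           filterlim (\<lambda>n. order (H n)) at_top sequentially \<and>
           (\<lambda>n. avg_order (wreath (G n) (H n))) \<longlonglongrightarrow> real p ^ r * avg_order B"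
proof -
  have p2: "p \<ge> 2" using prime_gt_1_nat[OF assms(1)] by linarith
  obtain k where grpB: "group B" and fB: "finite (carrier B)" and oB: "order B = p ^ k"
    using assms(2) by (auto simp: finite_p_group_def)
  define q1 where "q1 = p ^ (r - 1)"
  have q1: "q1 \<ge> 2"
  proof -
    have "p ^ 1 \<le> p ^ (r - 1)" using p2 assms(4) by (intro power_increasing) auto
    then show ?thesis using p2 by (simp add: q1_def)
  qed
  define c where "c q n = 1 - ((real q - 1) / real q) ^ n" for q n :: nat
  define N where "N = card (carrier B)"
  have N1: "N \<ge> 1" using fB group.is_monoid[OF grpB] monoid.one_closed
    by (fastforce simp: N_def Suc_le_eq card_gt_0_iff)
  have exH: "\<forall>n. \<exists>H'::nat monoid. group H' \<and> finite (carrier H') \<and> order H' = order (wreath (zqn q1 n) B)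
            \<and> avg_order H' = avg_order (wreath (zqn q1 n) B)"
  proof
    fix n
    have w: "wr2 (zqn q1 n) B" using zqn_props[OF q1, of n] grpB by (simp add: wr2.intro)
    have "group (wreath (zqn q1 n) B)" by (rule wr2.W_group[OF w])
    moreover have "finite (carrier (wreath (zqn q1 n) B))"
      using W_order(2) zqn_props[OF q1, of n] fB by blast
    ultimately show "\<exists>H'::nat monoid. group H' \<and> finite (carrier H') \<and> order H' = order (wreath (zqn q1 n) B)
            \<and> avg_order H' = avg_order (wreath (zqn q1 n) B)"
      using transport_nat by blast
  qed
  obtain H :: "nat \<Rightarrow> nat monoid" where
    H: "\<forall>n. group (H n) \<and> finite (carrier (H n)) \<and> order (H n) = order (wreath (zqn q1 n) B)
            \<and> avg_order (H n) = avg_order (wreath (zqn q1 n) B)"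
    using choice[OF exH] by blast
  note H = H[rule_format]
  have oH: "order (H n) = (q1 ^ n) ^ N * N" for n
    using H[of n] W_order(1)[of "zqn q1 n" B] zqn_props[OF q1, of n] fB
    by (simp add: N_def order_def)
  have bH: "c q1 n * real q1 * avg_order B \<le> avg_order (H n) \<and> avg_order (H n) \<le> real q1 * avg_order B" for n
  proof -
    have w: "wr2 (zqn q1 n) B" using zqn_props[OF q1, of n] grpB by (simp add: wr2.intro)
    obtain S where S: "S \<subseteq> carrier (zqn q1 n)" "\<forall>a\<in>S. group.ord (zqn q1 n) a = q1"
      "c q1 n * real (card (carrier (zqn q1 n))) \<le> real (card S)"
      using zqn_props[OF q1, of n] unfolding c_def by blast
    have fz: "finite (carrier (zqn q1 n))" and dz: "\<forall>a\<in>carrier (zqn q1 n). group.ord (zqn q1 n) a dvd q1"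
      using zqn_props[OF q1, of n] by blast+
    have q0: "q1 > 0" using q1 by simp
    show ?thesis using wr2.W_avg_bounds[OF w fz fB q0 dz S] H[of n] by simp
  qed
  have exG: "\<forall>n. \<exists>G'::nat monoid. group G' \<and> finite (carrier G') \<and> order G' = p ^ n \<and>
      (\<forall>a\<in>carrier G'. group.ord G' a dvd p) \<and>
      (\<exists>S\<subseteq>carrier G'. (\<forall>a\<in>S. group.ord G' a = p) \<and> c p n * real (card (carrier G')) \<le> real (card S))"
  proof
    fix n
    have Z: "group (zqn p n)" "finite (carrier (zqn p n))" "order (zqn p n) = p ^ n"
      "\<forall>a\<in>carrier (zqn p n). group.ord (zqn p n) a dvd p"
      using zqn_props[OF p2, of n] by blast+
    obtain S where S: "S \<subseteq> carrier (zqn p n)" "\<forall>a\<in>S. group.ord (zqn p n) a = p"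
      "c p n * real (card (carrier (zqn p n))) \<le> real (card S)"
      using zqn_props[OF p2, of n] unfolding c_def by blast
    obtain G' :: "nat monoid" and \<phi> where G': "group G'" "finite (carrier G')" "order G' = order (zqn p n)"
      and bij: "bij_betw \<phi> (carrier (zqn p n)) (carrier G')"
      and op: "\<forall>g\<in>carrier (zqn p n). group.ord G' (\<phi> g) = group.ord (zqn p n) g"
      using transport_nat[OF Z(1,2)] by blast
    have d: "\<forall>a\<in>carrier G'. group.ord G' a dvd p"
    proof
      fix a assume "a \<in> carrier G'"
      then obtain g where "g \<in> carrier (zqn p n)" "a = \<phi> g" using bij by (auto simp: bij_betw_def)
      then show "group.ord G' a dvd p" using op Z(4) by simp
    qed
    have sub: "\<phi> ` S \<subseteq> carrier G'" using bij S(1) by (auto simp: bij_betw_def)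
    have so: "\<forall>a\<in>\<phi> ` S. group.ord G' a = p" using op S(1,2) by auto
    have cs: "card (\<phi> ` S) = card S"
      using bij S(1) by (intro card_image) (auto simp: bij_betw_def intro: inj_on_subset)
    have cc: "card (carrier G') = card (carrier (zqn p n))" using bij by (simp add: bij_betw_same_card)
    show "\<exists>G'::nat monoid. group G' \<and> finite (carrier G') \<and> order G' = p ^ n \<and>
      (\<forall>a\<in>carrier G'. group.ord G' a dvd p) \<and>
      (\<exists>S\<subseteq>carrier G'. (\<forall>a\<in>S. group.ord G' a = p) \<and> c p n * real (card (carrier G')) \<le> real (card S))"
    proof (intro exI[of _ G'] conjI)
      show "group G'" "finite (carrier G')" by (fact G')+
      show "order G' = p ^ n" using G'(3) Z(3) by simp
      show "\<forall>a\<in>carrier G'. group.ord G' a dvd p" by (fact d)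
      have "c p n * real (card (carrier G')) \<le> real (card (\<phi> ` S))" using S(3) cc cs by simp
      then show "\<exists>S\<subseteq>carrier G'. (\<forall>a\<in>S. group.ord G' a = p) \<and> c p n * real (card (carrier G')) \<le> real (card S)"
        using sub so by blast
    qed
  qed
  obtain G :: "nat \<Rightarrow> nat monoid" where
    G: "\<forall>n. group (G n) \<and> finite (carrier (G n)) \<and> order (G n) = p ^ n \<and>
      (\<forall>a\<in>carrier (G n). group.ord (G n) a dvd p) \<and>
      (\<exists>S\<subseteq>carrier (G n). (\<forall>a\<in>S. group.ord (G n) a = p) \<and> c p n * real (card (carrier (G n))) \<le> real (card S))"
    using choice[OF exG] by blast
  note G = G[rule_format]
  have bW: "c p n * real p * avg_order (H n) \<le> avg_order (wreath (G n) (H n)) \<and>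
            avg_order (wreath (G n) (H n)) \<le> real p * avg_order (H n)" for n
  proof -
    have w: "wr2 (G n) (H n)" using G[of n] H[of n] by (simp add: wr2.intro)
    obtain S where S: "S \<subseteq> carrier (G n)" "\<forall>a\<in>S. group.ord (G n) a = p"
      "c p n * real (card (carrier (G n))) \<le> real (card S)" using G[of n] by blast
    have p0: "p > 0" using p2 by simp
    show ?thesis using wr2.W_avg_bounds[OF w _ _ p0 _ S] G[of n] H[of n] by blast
  qed
  define L where "L = real p ^ r * avg_order B"
  have pq: "real p * real q1 = real p ^ r" using assms(4)
    by (simp add: q1_def power_Suc[symmetric] del: power_Suc)
  have lower: "c p n * c q1 n * L \<le> avg_order (wreath (G n) (H n))" for n
  proof -
    have c0: "0 \<le> c p n" "0 \<le> c q1 n" using cfac(1)[OF p2] cfac(1)[OF q1] by (simp_all add: c_def)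
    have "c p n * c q1 n * L = c p n * real p * (c q1 n * real q1 * avg_order B)"
      by (simp add: L_def pq[symmetric] mult_ac)
    also have "\<dots> \<le> c p n * real p * avg_order (H n)"
      using bH[of n] c0 by (intro mult_left_mono) auto
    also have "\<dots> \<le> avg_order (wreath (G n) (H n))" using bW[of n] by blast
    finally show ?thesis .
  qed
  have upper: "avg_order (wreath (G n) (H n)) \<le> L" for n
  proof -
    have "avg_order (wreath (G n) (H n)) \<le> real p * avg_order (H n)" using bW[of n] by blast
    also have "\<dots> \<le> real p * (real q1 * avg_order B)" using bH[of n] by (intro mult_left_mono) auto
    also have "\<dots> = L" by (simp add: L_def pq[symmetric] mult_ac)
    finally show ?thesis .
  qed
  have lim1: "(\<lambda>n. c p n * c q1 n * L) \<longlonglongrightarrow> 1 * 1 * L"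
    unfolding c_def by (intro tendsto_mult cfac(2)[OF p2] cfac(2)[OF q1] tendsto_const)
  have lim: "(\<lambda>n. avg_order (wreath (G n) (H n))) \<longlonglongrightarrow> L"
    by (rule tendsto_sandwich[OF _ _ lim1[simplified] tendsto_const]) (use lower upper in auto)
  have fpG: "finite_p_group p (G n)" for n using G[of n] by (auto simp: finite_p_group_def)
  have fpH: "finite_p_group p (H n)" for n
  proof -
    have "order (H n) = p ^ ((r - 1) * n * p ^ k + k)"
      using oH[of n] oB by (simp add: q1_def N_def order_def power_add power_mult)
    then show ?thesis using H[of n] by (auto simp: finite_p_group_def)
  qed
  have tG: "filterlim (\<lambda>n. order (G n)) at_top sequentially"
    by (rule filterlim_at_top_mono[OF filterlim_ident]) (use G n_le_pow[OF p2] in auto)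
  have tH: "filterlim (\<lambda>n. order (H n)) at_top sequentially"
  proof (rule filterlim_at_top_mono[OF filterlim_ident], rule always_eventually, rule allI)
    fix n
    have "n \<le> q1 ^ n" by (rule n_le_pow[OF q1])
    also have "\<dots> \<le> (q1 ^ n) ^ N" using power_increasing[OF N1, of "q1 ^ n"] q1 by simp
    also have "\<dots> \<le> (q1 ^ n) ^ N * N" using N1 by simp
    finally show "n \<le> order (H n)" by (simp add: oH)
  qed
  show ?thesis unfolding L_def[symmetric] using fpG fpH tG tH lim by blast
qed

end
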